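(* Let $(\mathcal{S},\mathcal{A},P,r,\gamma)$ be a finite discounted MDP, let $\pi$ be a policy with advantage function $A^\pi$, fix a state $s\in\mathcal{S}$ and a scalar $\eta_s>0$. Define $\pi^+_s(\eta_s) := \operatorname{Proj}_{\Delta(\mathcal{A})}\big(\pi_s + \eta_s A^\pi_{s,\cdot}\big)$ and $f_s(\eta_s) := \sum_{a\in\mathcal{A}} \pi^+_{s,a}(\eta_s)\, A^\pi_{s,a}$. Then $$f_s(\eta_s) \ge \frac{\big(\max_{a\in\mathcal{A}} A^\pi_{s,a}\big)^2}{\max_{a\in\mathcal{A}} A^\pi_{s,a} + \frac{2+5|\mathcal{A}|}{\eta_s}}.$$
   Context: A finite discounted MDP has finite state space $\mathcal{S}$, finite action space $\mathcal{A}$, transition kernel $P$, reward $r:\mathcal{S}\times\mathcal{A}\to[0,1]$ and discount $\gamma\in[0,1)$. A (stationary stochastic) policy $\pi$ assigns to each state $s$ a distribution $\pi_s=(\pi_{s,a})_{a\in\mathcal{A}}\in\Delta(\mathcal{A})$ (the probability simplex). $V^\pi(s)=\mathbb{E}[\sum_{t\ge0}\gamma^t r(s_t,a_t)\mid s_0=s]$ with $a_t\sim\pi_{s_t}$, $s_{t+1}\sim P(\cdot\mid s_t,a_t)$; $Q^\pi(s,a)$ is defined analogously with $a_0=a$; the advantage is $A^\pi_{s,a}=Q^\pi(s,a)-V^\pi(s)$. $\operatorname{Proj}_{\Delta(\mathcal{A})}$ denotes Euclidean projection onto the probability simplex. *)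

theory Defs
  imports "HOL-Analysis.Analysis"
begin

text \<open>Finite discounted MDP with state type 's and action type 'a (both finite).
  Transition kernel P s a s', reward r s a, policy pi s a.\<close>

definition prob_simplex :: "('a::finite \<Rightarrow> real) set" where
  "prob_simplex = {p. (\<forall>a. 0 \<le> p a) \<and> (\<Sum>a\<in>UNIV. p a) = 1}"

definition finite_mdp :: "('s::finite \<Rightarrow> 'a::finite \<Rightarrow> 's \<Rightarrow> real) \<Rightarrow> ('s \<Rightarrow> 'a \<Rightarrow> real) \<Rightarrow> real \<Rightarrow> bool" where
  "finite_mdp P r \<gamma> \<longleftrightarrow> (\<forall>s a. P s a \<in> prob_simplex) \<and> (\<forall>s a. 0 \<le> r s a \<and> r s a \<le> 1)
     \<and> 0 \<le> \<gamma> \<and> \<gamma> < 1"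

definition is_policy :: "('s::finite \<Rightarrow> 'a::finite \<Rightarrow> real) \<Rightarrow> bool" where
  "is_policy \<pi> \<longleftrightarrow> (\<forall>s. \<pi> s \<in> prob_simplex)"

definition P_pol :: "('s::finite \<Rightarrow> 'a::finite \<Rightarrow> 's \<Rightarrow> real) \<Rightarrow> ('s \<Rightarrow> 'a \<Rightarrow> real) \<Rightarrow> 's \<Rightarrow> 's \<Rightarrow> real" where
  "P_pol P \<pi> s s' = (\<Sum>a\<in>UNIV. \<pi> s a * P s a s')"

definition r_pol :: "('s::finite \<Rightarrow> 'a::finite \<Rightarrow> real) \<Rightarrow> ('s \<Rightarrow> 'a \<Rightarrow> real) \<Rightarrow> 's \<Rightarrow> real" where
  "r_pol r \<pi> s = (\<Sum>a\<in>UNIV. \<pi> s a * r s a)"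

fun P_steps :: "('s::finite \<Rightarrow> 'a::finite \<Rightarrow> 's \<Rightarrow> real) \<Rightarrow> ('s \<Rightarrow> 'a \<Rightarrow> real) \<Rightarrow> nat \<Rightarrow> 's \<Rightarrow> 's \<Rightarrow> real" where
  "P_steps P \<pi> 0 s s' = (if s = s' then 1 else 0)"
| "P_steps P \<pi> (Suc n) s s' = (\<Sum>s''\<in>UNIV. P_steps P \<pi> n s s'' * P_pol P \<pi> s'' s')"

definition V_fun :: "('s::finite \<Rightarrow> 'a::finite \<Rightarrow> 's \<Rightarrow> real) \<Rightarrow> ('s \<Rightarrow> 'a \<Rightarrow> real) \<Rightarrow> real \<Rightarrow> ('s \<Rightarrow> 'a \<Rightarrow> real) \<Rightarrow> 's \<Rightarrow> real" where
  "V_fun P r \<gamma> \<pi> s = (\<Sum>t. \<gamma> ^ t * (\<Sum>s'\<in>UNIV. P_steps P \<pi> t s s' * r_pol r \<pi> s'))"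

definition Q_fun :: "('s::finite \<Rightarrow> 'a::finite \<Rightarrow> 's \<Rightarrow> real) \<Rightarrow> ('s \<Rightarrow> 'a \<Rightarrow> real) \<Rightarrow> real \<Rightarrow> ('s \<Rightarrow> 'a \<Rightarrow> real) \<Rightarrow> 's \<Rightarrow> 'a \<Rightarrow> real" where
  "Q_fun P r \<gamma> \<pi> s a = r s a + \<gamma> * (\<Sum>s'\<in>UNIV. P s a s' * V_fun P r \<gamma> \<pi> s')"

definition adv :: "('s::finite \<Rightarrow> 'a::finite \<Rightarrow> 's \<Rightarrow> real) \<Rightarrow> ('s \<Rightarrow> 'a \<Rightarrow> real) \<Rightarrow> real \<Rightarrow> ('s \<Rightarrow> 'a \<Rightarrow> real) \<Rightarrow> 's \<Rightarrow> 'a \<Rightarrow> real" where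
  "adv P r \<gamma> \<pi> s a = Q_fun P r \<gamma> \<pi> s a - V_fun P r \<gamma> \<pi> s"

definition proj_simplex :: "('a::finite \<Rightarrow> real) \<Rightarrow> ('a \<Rightarrow> real)" where
  "proj_simplex x = (THE y. y \<in> prob_simplex \<and>
      (\<forall>z\<in>prob_simplex. (\<Sum>a\<in>UNIV. (y a - x a)^2) \<le> (\<Sum>a\<in>UNIV. (z a - x a)^2)))"

end

theory Submission
  imports Defs
begin

lemma simplex_bounds:
  assumes "p \<in> prob_simplex" shows "0 \<le> p a" "p a \<le> 1"
proof -
  show "0 \<le> p a" using assms by (simp add: prob_simplex_def)
  have "p a \<le> (\<Sum>b\<in>UNIV. p b)"
    by (rule member_le_sum) (use assms in \<open>auto simp: prob_simplex_def\<close>)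
  then show "p a \<le> 1" using assms by (simp add: prob_simplex_def)
qed

lemma proj_exists:
  fixes x :: "'a::finite \<Rightarrow> real"
  shows "\<exists>y\<in>prob_simplex. \<forall>z\<in>prob_simplex. (\<Sum>a\<in>UNIV. (y a - x a)^2) \<le> (\<Sum>a\<in>UNIV. (z a - x a)^2)"
proof -
  define S :: "(real^'a) set" where "S = {v. (\<forall>i. 0 \<le> v$i) \<and> (\<Sum>i\<in>UNIV. v$i) = 1}"
  have cl: "closed S" unfolding S_def
    by (intro closed_Collect_conj closed_Collect_all closed_Collect_le closed_Collect_eq continuous_intros)
  have "bounded S"
  proof -
    have "norm v \<le> 1" if "v \<in> S" for v
    proof -
      have "norm v \<le> (\<Sum>i\<in>UNIV. \<bar>v$i\<bar>)" by (rule norm_le_l1_cart)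
      also have "\<dots> = (\<Sum>i\<in>UNIV. v$i)" using that by (simp add: S_def)
      finally show ?thesis using that by (simp add: S_def)
    qed
    then show ?thesis by (auto simp: bounded_iff)
  qed
  with cl have cS: "compact S" by (simp add: compact_eq_bounded_closed)
  have ne: "(\<chi> i. 1 / real CARD('a)) \<in> S" by (simp add: S_def)
  have "continuous_on S (\<lambda>v. \<Sum>a\<in>UNIV. (v$a - x a)^2)" by (intro continuous_intros)
  from continuous_attains_inf[OF cS _ this] ne obtain v where v: "v \<in> S"
    "\<And>w. w \<in> S \<Longrightarrow> (\<Sum>a\<in>UNIV. (v$a - x a)^2) \<le> (\<Sum>a\<in>UNIV. (w$a - x a)^2)" by blast
  show ?thesis
  proof (intro bexI[of _ "\<lambda>a. v$a"] ballI)
    show "(\<lambda>a. v$a) \<in> prob_simplex" using v(1) by (simp add: S_def prob_simplex_def)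
    fix z :: "'a \<Rightarrow> real" assume "z \<in> prob_simplex"
    then have "(\<chi> a. z a) \<in> S" by (simp add: S_def prob_simplex_def)
    from v(2)[OF this] show "(\<Sum>a\<in>UNIV. (v$a - x a)^2) \<le> (\<Sum>a\<in>UNIV. (z a - x a)^2)" by simp
  qed
qed

lemma proj_unique:
  fixes x :: "'a::finite \<Rightarrow> real"
  assumes "y1 \<in> prob_simplex" "\<forall>z\<in>prob_simplex. (\<Sum>a\<in>UNIV. (y1 a - x a)^2) \<le> (\<Sum>a\<in>UNIV. (z a - x a)^2)"
    and "y2 \<in> prob_simplex" "\<forall>z\<in>prob_simplex. (\<Sum>a\<in>UNIV. (y2 a - x a)^2) \<le> (\<Sum>a\<in>UNIV. (z a - x a)^2)"
  shows "y1 = y2"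
proof -
  define w where "w = (\<lambda>a. (y1 a + y2 a) / 2)"
  have "w \<in> prob_simplex" using assms(1,3)
    by (auto simp: prob_simplex_def w_def sum_divide_distrib[symmetric] sum.distrib)
  have eq: "(\<Sum>a\<in>UNIV. (w a - x a)^2) = ((\<Sum>a\<in>UNIV. (y1 a - x a)^2) + (\<Sum>a\<in>UNIV. (y2 a - x a)^2)) / 2
     - (\<Sum>a\<in>UNIV. (y1 a - y2 a)^2) / 4"
  proof -
    have "(\<Sum>a\<in>UNIV. (w a - x a)^2) = (\<Sum>a\<in>UNIV. ((y1 a - x a)^2 + (y2 a - x a)^2) / 2 - (y1 a - y2 a)^2 / 4)"
      by (rule sum.cong) (auto simp: w_def power2_eq_square field_simps)
    then show ?thesis by (simp add: sum_subtractf sum_divide_distrib[symmetric] sum.distrib)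
  qed
  have h12: "(\<Sum>a\<in>UNIV. (y1 a - x a)^2) \<le> (\<Sum>a\<in>UNIV. (w a - x a)^2)"
       "(\<Sum>a\<in>UNIV. (y2 a - x a)^2) \<le> (\<Sum>a\<in>UNIV. (w a - x a)^2)"
    using assms(2,4) \<open>w \<in> prob_simplex\<close> by auto
  have "(\<Sum>a\<in>UNIV. (y1 a - y2 a)^2) \<le> 0"
  proof -
    have gen: "\<And>A B C::real. A \<le> (A+B)/2 - C/4 \<Longrightarrow> B \<le> (A+B)/2 - C/4 \<Longrightarrow> C \<le> 0" by argo
    show ?thesis using h12 unfolding eq by (intro gen) (simp_all only: eq)
  qed
  moreover have "(\<Sum>a\<in>UNIV. (y1 a - y2 a)^2) \<ge> 0" by (intro sum_nonneg) auto
  ultimately have "(\<Sum>a\<in>UNIV. (y1 a - y2 a)^2) = 0" by linarith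
  then have "\<forall>a\<in>UNIV. (y1 a - y2 a)^2 = 0" by (simp add: sum_nonneg_eq_0_iff)
  then show ?thesis by auto
qed

lemma proj_props:
  fixes x :: "'a::finite \<Rightarrow> real"
  defines "y \<equiv> proj_simplex x"
  shows "y \<in> prob_simplex" and "\<And>z. z \<in> prob_simplex \<Longrightarrow> (\<Sum>a\<in>UNIV. (z a - y a) * (x a - y a)) \<le> 0"
proof -
  let ?P = "\<lambda>y. y \<in> prob_simplex \<and>
      (\<forall>z\<in>prob_simplex. (\<Sum>a\<in>UNIV. (y a - x a)^2) \<le> (\<Sum>a\<in>UNIV. (z a - x a)^2))"
  have ex1: "\<exists>!y. ?P y" using proj_exists[of x] proj_unique[of _ x] by blast
  have "?P (THE y. ?P y)" by (rule theI'[OF ex1])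
  then have "?P y" unfolding y_def proj_simplex_def .
  then have yS: "y \<in> prob_simplex" and ymin: "\<And>z. z \<in> prob_simplex \<Longrightarrow> (\<Sum>a\<in>UNIV. (y a - x a)^2) \<le> (\<Sum>a\<in>UNIV. (z a - x a)^2)"
    by auto
  show "y \<in> prob_simplex" by (fact yS)
  fix z :: "'a \<Rightarrow> real" assume z: "z \<in> prob_simplex"
  define B where "B = (\<Sum>a\<in>UNIV. (z a - y a) * (x a - y a))"
  define K where "K = (\<Sum>a\<in>UNIV. (z a - y a)^2)"
  have K0: "K \<ge> 0" unfolding K_def by (intro sum_nonneg) auto
  have key: "0 \<le> t * t * K - 2 * t * B" if t: "0 \<le> t" "t \<le> 1" for t
  proof -
    define zt where "zt = (\<lambda>a. y a + t * (z a - y a))"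
    have "zt \<in> prob_simplex"
    proof -
      have "0 \<le> zt a" for a
      proof -
        have "zt a = (1 - t) * y a + t * z a" by (simp add: zt_def algebra_simps)
        moreover have "0 \<le> y a" "0 \<le> z a" using yS z by (auto simp: prob_simplex_def)
        ultimately show ?thesis using t by simp
      qed
      moreover have "(\<Sum>a\<in>UNIV. zt a) = 1" using yS z
        by (simp add: zt_def prob_simplex_def sum.distrib sum_subtractf sum_distrib_left[symmetric])
      ultimately show ?thesis by (simp add: prob_simplex_def)
    qed
    from ymin[OF this] have "0 \<le> (\<Sum>a\<in>UNIV. (zt a - x a)^2) - (\<Sum>a\<in>UNIV. (y a - x a)^2)" by simp
    also have "\<dots> = (\<Sum>a\<in>UNIV. (zt a - x a)^2 - (y a - x a)^2)" by (simp add: sum_subtractf)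
    also have "\<dots> = (\<Sum>a\<in>UNIV. t * t * (z a - y a)^2 - 2 * t * ((z a - y a) * (x a - y a)))"
      by (rule sum.cong) (auto simp: zt_def power2_eq_square algebra_simps)
    also have "\<dots> = t * t * K - 2 * t * B"
      by (simp add: K_def B_def sum_subtractf sum_distrib_left)
    finally show ?thesis .
  qed
  show "B \<le> 0"
  proof (rule ccontr)
    assume "\<not> B \<le> 0" then have Bp: "B > 0" by simp
    show False
    proof (cases "K \<le> B")
      case True
      have "0 \<le> K - 2 * B" using key[of 1] by simp
      with True Bp show False by linarith
    next
      case False
      then have Kp: "K > 0" using Bp by linarith
      define t where "t = B / K"
      have t0: "0 < t" "t \<le> 1" using Bp Kp False by (auto simp: t_def)
      have "t * t * K = t * B" using Kp by (simp add: t_def)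
      with key[of t] t0 have "0 \<le> t * B - 2 * t * B" by simp
      with t0 Bp mult_pos_pos[of t B] show False by linarith
    qed
  qed
qed


context
  fixes P :: "'s::finite \<Rightarrow> 'a::finite \<Rightarrow> 's \<Rightarrow> real"
    and r :: "'s \<Rightarrow> 'a \<Rightarrow> real" and \<gamma> :: real
    and \<pi> :: "'s \<Rightarrow> 'a \<Rightarrow> real"
  assumes mdp: "finite_mdp P r \<gamma>" and pol: "is_policy \<pi>"
begin

lemma Ppol_nonneg: "0 \<le> P_pol P \<pi> s s'"
  using mdp pol unfolding P_pol_def finite_mdp_def is_policy_def prob_simplex_def
  by (intro sum_nonneg) auto

lemma Ppol_sum: "(\<Sum>s'\<in>UNIV. P_pol P \<pi> s s') = 1"
proof -
  have "(\<Sum>s'\<in>UNIV. P_pol P \<pi> s s') = (\<Sum>a\<in>UNIV. \<pi> s a * (\<Sum>s'\<in>UNIV. P s a s'))"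
    unfolding P_pol_def sum_distrib_left by (rule sum.swap)
  also have "\<dots> = 1" using mdp pol unfolding finite_mdp_def is_policy_def prob_simplex_def by simp
  finally show ?thesis .
qed

lemma Psteps_nonneg: "0 \<le> P_steps P \<pi> t s s'"
  by (induction t arbitrary: s') (auto intro!: sum_nonneg mult_nonneg_nonneg Ppol_nonneg)

lemma Psteps_sum: "(\<Sum>s'\<in>UNIV. P_steps P \<pi> t s s') = 1"
proof (induction t)
  case 0 then show ?case by simp
next
  case (Suc t)
  have "(\<Sum>s'\<in>UNIV. P_steps P \<pi> (Suc t) s s') = (\<Sum>s''\<in>UNIV. P_steps P \<pi> t s s'' * (\<Sum>s'\<in>UNIV. P_pol P \<pi> s'' s'))"
    unfolding P_steps.simps sum_distrib_left by (rule sum.swap)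
  also have "\<dots> = 1" using Suc by (simp add: Ppol_sum)
  finally show ?case .
qed

lemma Psteps_left: "P_steps P \<pi> (Suc t) s s' = (\<Sum>u\<in>UNIV. P_pol P \<pi> s u * P_steps P \<pi> t u s')"
proof (induction t arbitrary: s')
  case 0
  have "(\<Sum>s''\<in>UNIV. (if s = s'' then 1 else 0) * P_pol P \<pi> s'' s') = (\<Sum>s''\<in>UNIV. if s = s'' then P_pol P \<pi> s'' s' else 0)"
    by (rule sum.cong) auto
  also have "\<dots> = P_pol P \<pi> s s'" by simp
  finally have "(\<Sum>s''\<in>UNIV. (if s = s'' then 1 else 0) * P_pol P \<pi> s'' s') = P_pol P \<pi> s s'" .
  moreover have "(\<Sum>u\<in>UNIV. P_pol P \<pi> s u * (if u = s' then 1 else 0)) = P_pol P \<pi> s s'"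
    by (simp add: if_distrib cong: if_cong)
  ultimately show ?case by simp
next
  case (Suc t)
  have "P_steps P \<pi> (Suc (Suc t)) s s' = (\<Sum>v\<in>UNIV. P_steps P \<pi> (Suc t) s v * P_pol P \<pi> v s')" by simp
  also have "\<dots> = (\<Sum>v\<in>UNIV. (\<Sum>u\<in>UNIV. P_pol P \<pi> s u * P_steps P \<pi> t u v) * P_pol P \<pi> v s')"
    using Suc by simp
  also have "\<dots> = (\<Sum>u\<in>UNIV. P_pol P \<pi> s u * (\<Sum>v\<in>UNIV. P_steps P \<pi> t u v * P_pol P \<pi> v s'))"
    unfolding sum_distrib_left sum_distrib_right mult.assoc by (rule sum.swap)
  also have "\<dots> = (\<Sum>u\<in>UNIV. P_pol P \<pi> s u * P_steps P \<pi> (Suc t) u s')" by simp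
  finally show ?case .
qed

definition h :: "'s \<Rightarrow> nat \<Rightarrow> real" where
  "h s t = (\<Sum>s'\<in>UNIV. P_steps P \<pi> t s s' * r_pol r \<pi> s')"

lemma rpol_bounds: "0 \<le> r_pol r \<pi> s" "r_pol r \<pi> s \<le> 1"
proof -
  have r01: "0 \<le> r s a" "r s a \<le> 1" for a using mdp by (auto simp: finite_mdp_def)
  have p: "0 \<le> \<pi> s a" for a using pol by (auto simp: is_policy_def prob_simplex_def)
  have ps: "(\<Sum>a\<in>UNIV. \<pi> s a) = 1" using pol by (auto simp: is_policy_def prob_simplex_def)
  show "0 \<le> r_pol r \<pi> s" unfolding r_pol_def using r01 p by (intro sum_nonneg) auto
  have "r_pol r \<pi> s \<le> (\<Sum>a\<in>UNIV. \<pi> s a)" unfolding r_pol_def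
    by (intro sum_mono) (use r01 p in \<open>auto intro: mult_left_le\<close>)
  then show "r_pol r \<pi> s \<le> 1" using ps by simp
qed

lemma h_bounds: "0 \<le> h s t" "h s t \<le> 1"
proof -
  show "0 \<le> h s t" unfolding h_def by (intro sum_nonneg mult_nonneg_nonneg Psteps_nonneg rpol_bounds)
  have "h s t \<le> (\<Sum>s'\<in>UNIV. P_steps P \<pi> t s s')" unfolding h_def
    by (intro sum_mono) (use Psteps_nonneg rpol_bounds in \<open>auto intro: mult_left_le\<close>)
  then show "h s t \<le> 1" by (simp add: Psteps_sum)
qed

lemma gamma: "0 \<le> \<gamma>" "\<gamma> < 1" using mdp by (auto simp: finite_mdp_def)

lemma summable_h: "summable (\<lambda>t. \<gamma> ^ t * h s t)"
proof (rule summable_comparison_test[of _ "\<lambda>t. \<gamma> ^ t"])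
  show "\<exists>N. \<forall>n\<ge>N. norm (\<gamma> ^ n * h s n) \<le> \<gamma> ^ n"
    using h_bounds gamma by (auto intro!: exI[of _ 0] mult_left_le simp: abs_mult)
  show "summable (\<lambda>t. \<gamma> ^ t)" using gamma by (simp add: summable_geometric)
qed

lemma V_eq: "V_fun P r \<gamma> \<pi> s = (\<Sum>t. \<gamma> ^ t * h s t)"
  unfolding V_fun_def h_def ..

lemma h_Suc: "h s (Suc t) = (\<Sum>u\<in>UNIV. P_pol P \<pi> s u * h u t)"
  unfolding h_def Psteps_left sum_distrib_left sum_distrib_right mult.assoc by (rule sum.swap)

lemma bellman: "V_fun P r \<gamma> \<pi> s = r_pol r \<pi> s + \<gamma> * (\<Sum>u\<in>UNIV. P_pol P \<pi> s u * V_fun P r \<gamma> \<pi> u)"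
proof -
  have "(\<Sum>t. \<gamma> ^ Suc t * h s (Suc t)) = (\<Sum>t. \<gamma> ^ t * h s t) - h s 0"
    using suminf_split_head[OF summable_h[of s]] by simp
  moreover have "h s 0 = r_pol r \<pi> s"
  proof -
    have "h s 0 = (\<Sum>s'\<in>UNIV. if s = s' then r_pol r \<pi> s' else 0)" unfolding h_def
      by (rule sum.cong) auto
    then show ?thesis by simp
  qed
  moreover have "(\<Sum>t. \<gamma> ^ Suc t * h s (Suc t)) = (\<Sum>t. \<gamma> * (\<Sum>u\<in>UNIV. P_pol P \<pi> s u * (\<gamma> ^ t * h u t)))"
    by (simp add: h_Suc sum_distrib_left algebra_simps)
  moreover have "\<dots> = \<gamma> * (\<Sum>t. (\<Sum>u\<in>UNIV. P_pol P \<pi> s u * (\<gamma> ^ t * h u t)))"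
    by (intro suminf_mult summable_sum summable_mult summable_h)
  moreover have "(\<Sum>t. (\<Sum>u\<in>UNIV. P_pol P \<pi> s u * (\<gamma> ^ t * h u t))) = (\<Sum>u\<in>UNIV. (\<Sum>t. P_pol P \<pi> s u * (\<gamma> ^ t * h u t)))"
    by (intro suminf_sum summable_mult summable_h)
  moreover have "\<dots> = (\<Sum>u\<in>UNIV. P_pol P \<pi> s u * V_fun P r \<gamma> \<pi> u)"
    by (intro sum.cong refl) (simp add: V_eq suminf_mult summable_h)
  ultimately show ?thesis by (simp add: V_eq)
qed

lemma adv_mean_zero: "(\<Sum>a\<in>UNIV. \<pi> s a * adv P r \<gamma> \<pi> s a) = 0"
proof -
  have ps: "(\<Sum>a\<in>UNIV. \<pi> s a) = 1" using pol by (auto simp: is_policy_def prob_simplex_def)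
  have "(\<Sum>a\<in>UNIV. \<pi> s a * adv P r \<gamma> \<pi> s a)
     = r_pol r \<pi> s + \<gamma> * (\<Sum>a\<in>UNIV. \<pi> s a * (\<Sum>s'\<in>UNIV. P s a s' * V_fun P r \<gamma> \<pi> s'))
       - (\<Sum>a\<in>UNIV. \<pi> s a) * V_fun P r \<gamma> \<pi> s"
    unfolding adv_def Q_fun_def r_pol_def
    by (simp add: algebra_simps sum.distrib sum_subtractf sum_distrib_left sum_distrib_right)
  also have "(\<Sum>a\<in>UNIV. \<pi> s a * (\<Sum>s'\<in>UNIV. P s a s' * V_fun P r \<gamma> \<pi> s'))
      = (\<Sum>u\<in>UNIV. P_pol P \<pi> s u * V_fun P r \<gamma> \<pi> u)"
    unfolding P_pol_def sum_distrib_left sum_distrib_right mult.assoc by (rule sum.swap)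
  finally show ?thesis using bellman[of s] ps by simp
qed

end

lemma final_arith:
  fixes m g c :: real
  assumes m0: "m \<ge> 0" and g0: "g \<ge> 0" and d2: "m - g \<le> 2"
    and dsq: "m - g \<ge> 0 \<Longrightarrow> (m - g)^2 \<le> 2 * g" and c4: "c \<ge> 4"
  shows "m^2 \<le> g * (m + c)"
proof (cases "g \<ge> m")
  case True
  have "m^2 = m * m" by (simp add: power2_eq_square)
  also have "\<dots> \<le> g * m" using True m0 by (intro mult_right_mono) auto
  also have "\<dots> \<le> g * (m + c)" using g0 c4 by (intro mult_left_mono) auto
  finally show ?thesis .
next
  case False
  define d where "d = m - g"
  have dp: "d > 0" using False by (simp add: d_def)
  have gd: "g = m - d" by (simp add: d_def)
  have dsq': "d^2 \<le> 2 * (m - d)" using dsq dp by (simp add: d_def)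
  have cd: "c - d \<ge> 2" using d2 c4 by (simp add: d_def)
  have "(d^2 + 2 * d) * (c - d) \<le> (2 * m) * (c - d)"
    using dsq' cd by (intro mult_right_mono) auto
  moreover have "(d^2 + 2 * d) * (c - d) - 2 * d * c = d^2 * (c - d - 2)"
    by (simp add: power2_eq_square algebra_simps)
  moreover have "d^2 * (c - d - 2) \<ge> 0" using cd by simp
  ultimately have "d * c \<le> m * (c - d)" by linarith
  then show ?thesis unfolding gd by (simp add: power2_eq_square algebra_simps)
qed

lemma sq_dist_le2:
  fixes y e :: "'a::finite \<Rightarrow> real"
  assumes y: "y \<in> prob_simplex" and e: "e = (\<lambda>a. if a = b then 1 else 0)"
  shows "(\<Sum>a\<in>UNIV. (e a - y a)^2) \<le> 2"
proof -
  have "(\<Sum>a\<in>UNIV. (e a - y a)^2) \<le> (\<Sum>a\<in>UNIV. e a + y a)"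
  proof (intro sum_mono)
    fix a
    have "0 \<le> y a" "y a \<le> 1" using simplex_bounds[OF y] by auto
    then have "y a * y a \<le> y a" by (simp add: mult_left_le)
    moreover have "e a * e a = e a" "0 \<le> e a * y a" using \<open>0 \<le> y a\<close> by (auto simp: e)
    moreover have "(e a - y a)^2 = e a * e a - 2*(e a * y a) + y a * y a" by (simp add: power2_eq_square algebra_simps)
    ultimately show "(e a - y a)^2 \<le> e a + y a" by linarith
  qed
  also have "\<dots> = 2" using y by (simp add: sum.distrib e prob_simplex_def)
  finally show ?thesis .
qed

theorem mainTheorem2:
  fixes P :: "'s::finite \<Rightarrow> 'a::finite \<Rightarrow> 's \<Rightarrow> real"
    and r :: "'s \<Rightarrow> 'a \<Rightarrow> real" and \<gamma> :: real
    and \<pi> :: "'s \<Rightarrow> 'a \<Rightarrow> real" and s :: 's and \<eta> :: real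
  assumes "finite_mdp P r \<gamma>" and "is_policy \<pi>" and "\<eta> > 0"
  defines "A \<equiv> adv P r \<gamma> \<pi>"
  defines "\<pi>plus \<equiv> proj_simplex (\<lambda>a. \<pi> s a + \<eta> * A s a)"
  defines "M \<equiv> Max (range (\<lambda>a. A s a))"
  shows "(\<Sum>a\<in>UNIV. \<pi>plus a * A s a) \<ge> M^2 / (M + (2 + 5 * real CARD('a)) / \<eta>)"
proof -
  define x where "x = (\<lambda>a. \<pi> s a + \<eta> * A s a)"
  define y where "y = \<pi>plus"
  define p where "p = \<pi> s"
  define B where "B = A s"
  have yx: "y = proj_simplex x" by (simp add: y_def \<pi>plus_def x_def)
  have yS: "y \<in> prob_simplex" using proj_props(1)[of x] yx by simp
  have var: "\<And>z. z \<in> prob_simplex \<Longrightarrow> (\<Sum>a\<in>UNIV. (z a - y a) * (x a - y a)) \<le> 0"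
    using proj_props(2)[of _ x] yx by simp
  have pS: "p \<in> prob_simplex" using assms(2) by (simp add: p_def is_policy_def)
  have mean0: "(\<Sum>a\<in>UNIV. p a * B a) = 0"
    using adv_mean_zero[OF assms(1,2)] by (simp add: p_def B_def A_def)
  have xd: "x a = p a + \<eta> * B a" for a by (simp add: x_def p_def B_def)
  have "M \<in> range B" unfolding M_def B_def by (intro Max_in) auto
  then obtain b where bM: "B b = M" by auto
  have Ble: "B a \<le> M" for a unfolding M_def B_def by (intro Max_ge) auto
  define f where "f = (\<Sum>a\<in>UNIV. y a * B a)"
  define Q where "Q = (\<Sum>a\<in>UNIV. (p a - y a)^2)"
  have Q0: "Q \<ge> 0" unfolding Q_def by (intro sum_nonneg) auto
  have ysum: "(\<Sum>a\<in>UNIV. y a) = 1" using yS by (simp add: prob_simplex_def)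
  have y01: "0 \<le> y a" "y a \<le> 1" for a using simplex_bounds[OF yS] by auto
  have p01: "0 \<le> p a" "p a \<le> 1" for a using simplex_bounds[OF pS] by auto
  have F1: "Q \<le> \<eta> * f"
  proof -
    have "(\<Sum>a\<in>UNIV. (p a - y a) * (x a - y a)) = (\<Sum>a\<in>UNIV. (p a - y a)^2 + \<eta> * (p a * B a) - \<eta> * (y a * B a))"
      by (rule sum.cong) (auto simp: xd power2_eq_square algebra_simps)
    also have "\<dots> = Q + \<eta> * (\<Sum>a\<in>UNIV. p a * B a) - \<eta> * f"
      by (simp add: Q_def f_def sum.distrib sum_subtractf sum_distrib_left)
    finally have "(\<Sum>a\<in>UNIV. (p a - y a) * (x a - y a)) = Q - \<eta> * f" using mean0 by simp
    with var[OF pS] show ?thesis by simp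
  qed
  have M0: "M \<ge> 0"
  proof -
    have "0 = (\<Sum>a\<in>UNIV. p a * B a)" using mean0 by simp
    also have "\<dots> \<le> (\<Sum>a\<in>UNIV. p a * M)" by (intro sum_mono mult_left_mono Ble p01)
    also have "\<dots> = M" using pS by (simp add: sum_distrib_right[symmetric] prob_simplex_def)
    finally show ?thesis .
  qed
  define e where "e = (\<lambda>a. if a = b then 1 else (0::real))"
  have eS: "e \<in> prob_simplex" by (simp add: e_def prob_simplex_def)
  define T where "T = (\<Sum>a\<in>UNIV. (e a - y a) * (y a - p a))"
  have F2: "\<eta> * (M - f) \<le> T"
  proof -
    have "(\<Sum>a\<in>UNIV. e a * B a) = (\<Sum>a\<in>UNIV. if a = b then B a else 0)"
      by (rule sum.cong) (auto simp: e_def)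
    then have eB: "(\<Sum>a\<in>UNIV. e a * B a) = M" using bM by simp
    have "(\<Sum>a\<in>UNIV. (e a - y a) * (x a - y a)) = (\<Sum>a\<in>UNIV. \<eta> * (e a * B a) - \<eta> * (y a * B a) - (e a - y a) * (y a - p a))"
      by (rule sum.cong) (auto simp: xd algebra_simps)
    also have "\<dots> = \<eta> * M - \<eta> * f - T"
      by (simp add: T_def f_def sum_subtractf sum_distrib_left[symmetric] eB)
    finally show ?thesis using var[OF eS] by (simp add: algebra_simps)
  qed
  have CS: "T^2 \<le> 2 * Q"
  proof -
    have "T^2 \<le> (\<Sum>a\<in>UNIV. (e a - y a)^2) * (\<Sum>a\<in>UNIV. (y a - p a)^2)"
      unfolding T_def by (rule Cauchy_Schwarz_ineq_sum)
    also have "(\<Sum>a\<in>UNIV. (y a - p a)^2) = Q" unfolding Q_def by (rule sum.cong) (auto simp: power2_commute)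
    also have "(\<Sum>a\<in>UNIV. (e a - y a)^2) * Q \<le> 2 * Q"
      using sq_dist_le2[OF yS e_def] Q0 by (intro mult_right_mono)
    finally show ?thesis .
  qed
  have F3a: "y a * (\<eta> * (M - B a)) \<le> 2 * y a" for a
  proof (cases "y a = 0")
    case True then show ?thesis by simp
  next
    case False
    then have ya: "y a > 0" using y01[of a] by simp
    show ?thesis
    proof (cases "a = b")
      case True then show ?thesis using bM ya by simp
    next
      case anb: False
      define z where "z = (\<lambda>c. y c + (if c = b then y a else 0) - (if c = a then y a else 0))"
      have "z \<in> prob_simplex"
      proof -
        have "0 \<le> z c" for c using y01[of c] y01[of a] anb by (auto simp: z_def)
        moreover have "(\<Sum>c\<in>UNIV. z c) = 1"
          using ysum unfolding z_def by (simp only: sum.distrib sum_subtractf) simp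
        ultimately show ?thesis by (simp add: prob_simplex_def)
      qed
      from var[OF this] have "(\<Sum>c\<in>UNIV. (z c - y c) * (x c - y c)) \<le> 0" .
      moreover have "(\<Sum>c\<in>UNIV. (z c - y c) * (x c - y c)) = y a * (x b - y b) - y a * (x a - y a)"
      proof -
        have "(\<Sum>c\<in>UNIV. (z c - y c) * (x c - y c)) =
            (\<Sum>c\<in>UNIV. (if c = b then y a * (x c - y c) else 0) - (if c = a then y a * (x c - y c) else 0))"
          by (rule sum.cong) (auto simp: z_def)
        then show ?thesis by (simp add: sum_subtractf)
      qed
      ultimately have "y a * ((x b - y b) - (x a - y a)) \<le> 0" by (simp add: algebra_simps)
      with ya have "(x b - y b) - (x a - y a) \<le> 0" by (simp add: mult_le_0_iff)
      then have "\<eta> * (M - B a) \<le> p a - p b + y b - y a" using bM by (simp add: xd algebra_simps)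
      also have "\<dots> \<le> 2" using p01[of a] p01[of b] y01[of a] y01[of b] by linarith
      finally show ?thesis using ya by simp
    qed
  qed
  have F3: "\<eta> * (M - f) \<le> 2"
  proof -
    have "(\<Sum>a\<in>UNIV. y a * (\<eta> * (M - B a))) = (\<Sum>a\<in>UNIV. (\<eta> * M) * y a - \<eta> * (y a * B a))"
      by (rule sum.cong) (auto simp: algebra_simps)
    also have "\<dots> = (\<eta> * M) * (\<Sum>a\<in>UNIV. y a) - \<eta> * f"
      by (simp only: sum_subtractf sum_distrib_left[symmetric] f_def)
    finally have "\<eta> * (M - f) = (\<Sum>a\<in>UNIV. y a * (\<eta> * (M - B a)))" using ysum by (simp add: algebra_simps)
    also have "\<dots> \<le> (\<Sum>a\<in>UNIV. 2 * y a)" by (intro sum_mono F3a)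
    also have "\<dots> = 2" by (simp add: sum_distrib_left[symmetric] ysum)
    finally show ?thesis .
  qed
  define c where "c = 2 + 5 * real CARD('a)"
  have "CARD('a) \<ge> 1" using finite_UNIV_card_ge_0[where 'a='a] by simp
  then have "real CARD('a) \<ge> 1" by simp
  then have c4: "c \<ge> 4" unfolding c_def by linarith
  have main: "(\<eta> * M)^2 \<le> (\<eta> * f) * (\<eta> * M + c)"
  proof (rule final_arith[OF _ _ _ _ c4])
    show "\<eta> * M \<ge> 0" using M0 assms(3) by simp
    show "\<eta> * f \<ge> 0" using F1 Q0 by linarith
    show "\<eta> * M - \<eta> * f \<le> 2" using F3 by (simp add: algebra_simps)
    assume h: "\<eta> * M - \<eta> * f \<ge> 0"
    have "(\<eta> * M - \<eta> * f)^2 \<le> T^2"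
      using F2 h by (intro power_mono) (auto simp: algebra_simps)
    also have "\<dots> \<le> 2 * (\<eta> * f)" using CS F1 by linarith
    finally show "(\<eta> * M - \<eta> * f)^2 \<le> 2 * (\<eta> * f)" .
  qed
  have den: "M + c / \<eta> > 0" using M0 c4 assms(3) by (simp add: add_nonneg_pos)
  have "\<eta>^2 * M^2 \<le> \<eta>^2 * (f * (M + c / \<eta>))"
  proof -
    have "\<eta>^2 * (f * (M + c / \<eta>)) = (\<eta> * f) * (\<eta> * M + c)"
      using assms(3) by (simp add: power2_eq_square field_simps)
    moreover have "(\<eta> * M)^2 = \<eta>^2 * M^2" by (simp add: power_mult_distrib)
    ultimately show ?thesis using main by linarith
  qed
  then have "M^2 \<le> f * (M + c / \<eta>)" using assms(3) by simp
  then have "M^2 / (M + c / \<eta>) \<le> f" using den by (simp add: pos_divide_le_eq)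
  then show ?thesis by (simp add: f_def y_def B_def c_def)
qed

end
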